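(* Let $X$ be a real normed space, $\mathcal M=\{M_1,\dots,M_n\}\subset\mathcal P^f_{\mathrm{Cl,Conv}}(X)$, $\Sigma(\mathcal M)\neq\emptyset$ and $d=(d_1,\dots,d_n)\in\Omega(\mathcal M)$. Suppose there is an index $s$ such that every nonempty set of the form $B_r(M_s)\cap K_d$ ($0\le r<\infty$) lies in the same finiteness class as the $M_i$. Then for every $K\in\Sigma_d(\mathcal M)$ there exists $i$ with $d_i=\sup_{x\in M_i}|x\,K|$.
   Context: For a metric space $X$, $p\in X$, $A\subset X$: $|p\,A|=\inf_{a\in A}|p\,a|$ ($=\infty$ if $A=\emptyset$); for $0\le r<\infty$, $B_r(A)=\{p:|p\,A|\le r\}$. For nonempty $A,B$, $d_H(A,B)=\max\{\sup_{a\in A}|a\,B|,\sup_{b\in B}|b\,A|\}\in[0,\infty]$. $\mathcal P_{\mathrm{Cl}}(X)$ is the set of nonempty closed subsets of $X$ with $d_H$; a finiteness class is an equivalence class of $A\sim B\iff d_H(A,B)<\infty$. $\mathcal P^f_{\mathrm{Cl,Conv}}(X)$ denotes a fixed finiteness class of the space of nonempty closed convex subsets of $X$ (a family of nonempty closed convex sets pairwise at finite Hausdorff distance, maximal with this property); let $\mathcal P^f_{\mathrm{Cl}}(X)$ be the finiteness class of $\mathcal P_{\mathrm{Cl}}(X)$ containing it. For $\mathcal M=\{M_1,\dots,M_n\}$ in it, $S_{\mathcal M}(Y)=\sum_i d_H(Y,M_i)$; $\Sigma(\mathcal M)$ is the set of minimizers of $S_{\mathcal M}$ over $\mathcal P^f_{\mathrm{Cl}}(X)$;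 for $K\in\Sigma(\mathcal M)$, $d(K)=(d_H(K,M_1),\dots,d_H(K,M_n))$; $\Omega(\mathcal M)=\{d(K):K\in\Sigma(\mathcal M)\}$; for $d\in\Omega(\mathcal M)$, $\Sigma_d(\mathcal M)=\{K\in\Sigma(\mathcal M):d(K)=d\}$ and $K_d=\bigcap_{i=1}^nB_{d_i}(M_i)$. *)

theory Defs
  imports "HOL-Analysis.Analysis"
begin

text \<open>Point-to-set distance |p A| with values in the extended reals (infinite for empty A).\<close>
definition pdist :: "'a::metric_space \<Rightarrow> 'a set \<Rightarrow> ereal" where
  "pdist p A = (INF a\<in>A. ereal (dist p a))"

definition nbhd :: "real \<Rightarrow> 'a::metric_space set \<Rightarrow> 'a set" where
  "nbhd r A = {p. pdist p A \<le> ereal r}"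

definition dH :: "'a::metric_space set \<Rightarrow> 'a set \<Rightarrow> ereal" where
  "dH A B = max (SUP a\<in>A. pdist a B) (SUP b\<in>B. pdist b A)"

definition fin_class :: "'a::metric_space set \<Rightarrow> 'a set set" where
  "fin_class A = {Y. Y \<noteq> {} \<and> closed Y \<and> dH Y A < \<infinity>}"

definition S_M :: "nat \<Rightarrow> (nat \<Rightarrow> 'a::metric_space set) \<Rightarrow> 'a set \<Rightarrow> ereal" where
  "S_M n M Y = (\<Sum>i<n. dH Y (M i))"

definition Sigma_M :: "nat \<Rightarrow> (nat \<Rightarrow> 'a::metric_space set) \<Rightarrow> 'a set set" where
  "Sigma_M n M = {K \<in> fin_class (M 0). \<forall>Y \<in> fin_class (M 0). S_M n M K \<le> S_M n M Y}"

definition dvec :: "nat \<Rightarrow> (nat \<Rightarrow> 'a::metric_space set) \<Rightarrow> 'a set \<Rightarrow> ereal list" where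
  "dvec n M K = map (\<lambda>i. dH K (M i)) [0..<n]"

definition Omega_M :: "nat \<Rightarrow> (nat \<Rightarrow> 'a::metric_space set) \<Rightarrow> ereal list set" where
  "Omega_M n M = dvec n M ` Sigma_M n M"

definition Sigma_d :: "nat \<Rightarrow> (nat \<Rightarrow> 'a::metric_space set) \<Rightarrow> ereal list \<Rightarrow> 'a set set" where
  "Sigma_d n M d = {K \<in> Sigma_M n M. dvec n M K = d}"

definition K_d :: "nat \<Rightarrow> (nat \<Rightarrow> 'a::metric_space set) \<Rightarrow> ereal list \<Rightarrow> 'a set" where
  "K_d n M d = (\<Inter>i<n. {p. pdist p (M i) \<le> d ! i})"

end

theory Submission imports Defs begin

lemma pdist_infdist:
  assumes "A \<noteq> {}" shows "pdist p A = ereal (infdist p A)"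
proof -
  obtain a where a: "a \<in> A" using assms by blast
  have lo: "0 \<le> (INF a\<in>A. ereal (dist p a))" by (rule INF_greatest) simp
  have hi: "(INF a\<in>A. ereal (dist p a)) \<le> ereal (dist p a)" using a by (rule INF_lower)
  have "\<bar>INF a\<in>A. ereal (dist p a)\<bar> \<noteq> \<infinity>" using lo hi by auto
  then have "ereal (INF a\<in>A. dist p a) = (INF a\<in>A. ereal (dist p a))" by (rule ereal_INF)
  then show ?thesis unfolding pdist_def using infdist_notempty[OF assms] by simp
qed

lemma infdist_approx:
  assumes "A \<noteq> {}" "e > 0" shows "\<exists>a\<in>A. dist x a < infdist x A + e"
proof -
  have "(INF a\<in>A. dist x a) < infdist x A + e" unfolding infdist_notempty[OF assms(1)] using assms(2) by linarith
  moreover have "bdd_below ((\<lambda>a. dist x a) ` A)" by (rule bdd_belowI[of _ 0]) auto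
  ultimately show ?thesis using cINF_less_iff[of A "\<lambda>a. dist x a"] assms(1) by blast
qed

lemma infdist_convex:
  fixes x y :: "'a::real_normed_vector"
  assumes "convex M" "M \<noteq> {}" "0 \<le> t" "t \<le> 1"
  shows "infdist ((1-t) *\<^sub>R x + t *\<^sub>R y) M \<le> (1-t) * infdist x M + t * infdist y M"
proof (rule field_le_epsilon)
  fix e :: real assume e: "e > 0"
  obtain m1 where m1: "m1 \<in> M" "dist x m1 < infdist x M + e" using infdist_approx[OF assms(2) e] by blast
  obtain m2 where m2: "m2 \<in> M" "dist y m2 < infdist y M + e" using infdist_approx[OF assms(2) e] by blast
  have mM: "(1-t) *\<^sub>R m1 + t *\<^sub>R m2 \<in> M" using convexD[OF assms(1) m1(1) m2(1)] assms by simp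
  have "infdist ((1-t) *\<^sub>R x + t *\<^sub>R y) M \<le> dist ((1-t) *\<^sub>R x + t *\<^sub>R y) ((1-t) *\<^sub>R m1 + t *\<^sub>R m2)"
    by (rule infdist_le[OF mM])
  also have "\<dots> = norm ((1-t) *\<^sub>R (x - m1) + t *\<^sub>R (y - m2))"
    by (simp add: dist_norm algebra_simps)
  also have "\<dots> \<le> (1-t) * dist x m1 + t * dist y m2"
    using norm_triangle_ineq[of "(1-t) *\<^sub>R (x - m1)" "t *\<^sub>R (y - m2)"] assms
    by (simp add: dist_norm)
  also have "\<dots> \<le> (1-t) * (infdist x M + e) + t * (infdist y M + e)"
    using m1 m2 assms by (intro add_mono mult_left_mono) auto
  also have "\<dots> = (1-t) * infdist x M + t * infdist y M + e" by (simp add: algebra_simps)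
  finally show "infdist ((1-t) *\<^sub>R x + t *\<^sub>R y) M \<le> (1-t) * infdist x M + t * infdist y M + e" .
qed

lemma common_pos:
  assumes "\<And>i. i < (n::nat) \<Longrightarrow> \<exists>c>0. P i (c::real)"
    and "\<And>i c c'. P i c \<Longrightarrow> 0 < c' \<Longrightarrow> c' \<le> c \<Longrightarrow> P i c'"
  shows "\<exists>c>0. \<forall>i<n. P i c"
  using assms(1)
proof (induction n)
  case 0 then show ?case by (auto intro: exI[of _ 1])
next
  case (Suc n)
  then obtain c where c: "c > 0" "\<forall>i<n. P i c" by auto
  obtain c' where c': "c' > 0" "P n c'" using Suc.prems by blast
  have "\<forall>i<Suc n. P i (min c c')"
  proof (intro allI impI)
    fix i assume "i < Suc n"
    then show "P i (min c c')" proof (cases "i = n")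
      case True then show ?thesis using c c' assms(2)[of i c' "min c c'"] by simp
    next
      case False then have "i < n" using \<open>i < Suc n\<close> by simp
      then show ?thesis using c c' assms(2)[of i c "min c c'"] by simp
    qed
  qed
  then show ?case using c c' by (intro exI[of _ "min c c'"]) auto
qed

lemma dH_infdist:
  assumes "A \<noteq> {}" "B \<noteq> {}"
  shows "dH A B = max (SUP a\<in>A. ereal (infdist a B)) (SUP b\<in>B. ereal (infdist b A))"
proof -
  have "(SUP a\<in>A. pdist a B) = (SUP a\<in>A. ereal (infdist a B))" using pdist_infdist[OF assms(2)] by simp
  moreover have "(SUP b\<in>B. pdist b A) = (SUP b\<in>B. ereal (infdist b A))" using pdist_infdist[OF assms(1)] by simp
  ultimately show ?thesis unfolding dH_def by simp
qed

lemma dH_nonneg: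
  assumes "A \<noteq> {}" "B \<noteq> {}" shows "0 \<le> dH A B"
proof -
  obtain a where a: "a \<in> A" using assms by blast
  have "ereal 0 \<le> ereal (infdist a B)" using infdist_nonneg by simp
  also have "\<dots> \<le> (SUP a\<in>A. ereal (infdist a B))" using a by (rule SUP_upper)
  also have "\<dots> \<le> dH A B" unfolding dH_infdist[OF assms] by simp
  finally show ?thesis by (simp add: zero_ereal_def)
qed

theorem mainTheorem16:
  fixes M :: "nat \<Rightarrow> 'a::real_normed_vector set" and n :: nat and d :: "ereal list"
  assumes "n \<ge> 1"
    and "\<And>i. i < n \<Longrightarrow> M i \<noteq> {} \<and> closed (M i) \<and> convex (M i)"
    and "\<And>i j. i < n \<Longrightarrow> j < n \<Longrightarrow> dH (M i) (M j) < \<infinity>"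
    and "Sigma_M n M \<noteq> {}"
    and "d \<in> Omega_M n M"
    and "\<exists>s<n. \<forall>r::real. r \<ge> 0 \<longrightarrow> nbhd r (M s) \<inter> K_d n M d \<noteq> {} \<longrightarrow>
           nbhd r (M s) \<inter> K_d n M d \<in> fin_class (M 0)"
  shows "\<forall>K \<in> Sigma_d n M d. \<exists>i<n. d ! i = (SUP x\<in>M i. pdist x K)"
proof
  fix K assume KS: "K \<in> Sigma_d n M d"
  obtain s where s: "s < n" and hs: "\<forall>r::real. r \<ge> 0 \<longrightarrow> nbhd r (M s) \<inter> K_d n M d \<noteq> {} \<longrightarrow>
           nbhd r (M s) \<inter> K_d n M d \<in> fin_class (M 0)" using assms(6) by blast
  have KSig: "K \<in> Sigma_M n M" and dK: "dvec n M K = d" using KS unfolding Sigma_d_def by auto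
  have Kfc: "K \<in> fin_class (M 0)" and Kmin: "\<forall>Y\<in>fin_class (M 0). S_M n M K \<le> S_M n M Y"
    using KSig unfolding Sigma_M_def by auto
  have Kne: "K \<noteq> {}" using Kfc unfolding fin_class_def by auto
  have Mne: "\<And>i. i < n \<Longrightarrow> M i \<noteq> {}" and Mcv: "\<And>i. i < n \<Longrightarrow> convex (M i)"
    and Mcl: "\<And>i. i < n \<Longrightarrow> closed (M i)" using assms(2) by auto
  have n0: "0 < n" using assms(1) by simp
  have dnth: "\<And>i. i < n \<Longrightarrow> d ! i = dH K (M i)" using dK unfolding dvec_def by auto
  have M0fc: "M 0 \<in> fin_class (M 0)" unfolding fin_class_def using Mne[OF n0] Mcl[OF n0] assms(3)[OF n0 n0] by auto
  have "S_M n M K \<le> S_M n M (M 0)" using Kmin M0fc by blast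
  moreover have "S_M n M (M 0) < \<infinity>"
  proof -
    have "\<And>i. i \<in> {..<n} \<Longrightarrow> dH (M 0) (M i) \<noteq> \<infinity>" using assms(3)[OF n0] by auto
    then have "(\<Sum>i<n. dH (M 0) (M i)) \<noteq> \<infinity>" using sum_Pinfty by (metis (no_types, lifting))
    then show ?thesis unfolding S_M_def by (simp add: top.not_eq_extremum)
  qed
  ultimately have SKfin: "S_M n M K < \<infinity>" by (rule order.strict_trans1)
  have dHKnn: "\<And>i. i < n \<Longrightarrow> 0 \<le> dH K (M i)" using dH_nonneg Kne Mne by blast
  have dHKfin: "\<And>i. i < n \<Longrightarrow> dH K (M i) < \<infinity>"
  proof -
    fix i assume i: "i < n"
    have eq: "S_M n M K = dH K (M i) + (\<Sum>j\<in>{..<n}-{i}. dH K (M j))" unfolding S_M_def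
      by (rule sum.remove) (use i in auto)
    have "0 \<le> (\<Sum>j\<in>{..<n}-{i}. dH K (M j))" by (rule sum_nonneg) (use dHKnn in auto)
    then have "dH K (M i) \<le> S_M n M K" unfolding eq by (simp add: add_increasing2)
    then show "dH K (M i) < \<infinity>" using SKfin by (rule order.strict_trans1)
  qed
  define D where "D i = real_of_ereal (dH K (M i))" for i
  have dHK: "\<And>i. i < n \<Longrightarrow> dH K (M i) = ereal (D i)"
  proof -
    fix i assume i: "i < n"
    show "dH K (M i) = ereal (D i)" unfolding D_def using dHKnn[OF i] dHKfin[OF i] by (cases "dH K (M i)") auto
  qed
  show "\<exists>i<n. d ! i = (SUP x\<in>M i. pdist x K)"
  proof (rule ccontr)
    assume nc: "\<not> (\<exists>i<n. d ! i = (SUP x\<in>M i. pdist x K))"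
    have A: "\<And>i k. i < n \<Longrightarrow> k \<in> K \<Longrightarrow> infdist k (M i) \<le> D i"
    proof -
      fix i k assume i: "i < n" and k: "k \<in> K"
      have "ereal (infdist k (M i)) \<le> (SUP k\<in>K. ereal (infdist k (M i)))" using k by (rule SUP_upper)
      also have "\<dots> \<le> dH K (M i)" unfolding dH_infdist[OF Kne Mne[OF i]] by simp
      finally show "infdist k (M i) \<le> D i" using dHK[OF i] by simp
    qed
    have B: "\<And>i. i < n \<Longrightarrow> \<exists>c>0. \<forall>x\<in>M i. infdist x K \<le> D i - c"
    proof -
      fix i assume i: "i < n"
      define Bi where "Bi = (SUP x\<in>M i. ereal (infdist x K))"
      have "Bi \<le> dH K (M i)" unfolding Bi_def dH_infdist[OF Kne Mne[OF i]] by simp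
      moreover have "Bi \<noteq> dH K (M i)"
        using nc i dnth[OF i] pdist_infdist[OF Kne] unfolding Bi_def by auto
      ultimately have lt: "Bi < ereal (D i)" using dHK[OF i] by simp
      obtain x0 where x0: "x0 \<in> M i" using Mne[OF i] by blast
      have "ereal (infdist x0 K) \<le> Bi" unfolding Bi_def using x0 by (rule SUP_upper)
      then have "0 \<le> Bi" using infdist_nonneg[of x0 K] by (metis ereal_less_eq(5) order_trans)
      then obtain b where b: "Bi = ereal b" using lt by (cases Bi) auto
      have bl: "b < D i" using lt b by simp
      have "\<forall>x\<in>M i. infdist x K \<le> D i - (D i - b)"
      proof
        fix x assume "x \<in> M i"
        then have "ereal (infdist x K) \<le> Bi" unfolding Bi_def by (rule SUP_upper)
        then show "infdist x K \<le> D i - (D i - b)" using b by simp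
      qed
      then show "\<exists>c>0. \<forall>x\<in>M i. infdist x K \<le> D i - c" using bl by (intro exI[of _ "D i - b"]) auto
    qed
    obtain c where c: "c > 0" and cB: "\<forall>i<n. \<forall>x\<in>M i. infdist x K \<le> D i - c"
      using common_pos[of n "\<lambda>i c. \<forall>x\<in>M i. infdist x K \<le> D i - c", OF B] by fastforce
    have Dsc: "c \<le> D s"
    proof -
      obtain x where "x \<in> M s" using Mne[OF s] by blast
      then show ?thesis using cB s infdist_nonneg[of x K] by fastforce
    qed
    define t where "t = c / (4 * D s + c)"
    have t0: "0 < t" unfolding t_def using c Dsc by simp
    have t1: "t \<le> 1" unfolding t_def using c Dsc by simp
    have t4: "t * (4 * D s) \<le> c"
    proof -
      have "t * (4 * D s) \<le> t * (4 * D s + c)" using t0 c by simp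
      also have "\<dots> = c" unfolding t_def using c Dsc by simp
      finally show ?thesis .
    qed
    define r where "r = D s - t * c / 2"
    have r0: "0 \<le> r" 
    proof -
      have "t * c \<le> c" using mult_left_le_one_le[of c t] t0 t1 c by simp
      then show ?thesis unfolding r_def using c Dsc by linarith
    qed
    define L where "L = {p. (\<forall>i<n. infdist p (M i) \<le> D i) \<and> infdist p (M s) \<le> r}"
    have near: "\<And>k. k \<in> K \<Longrightarrow> \<exists>k'\<in>L. dist k k' \<le> c / 2"
    proof -
      fix k assume k: "k \<in> K"
      have c2: "c / 2 > 0" using c by simp
      obtain m where m: "m \<in> M s" "dist k m < infdist k (M s) + c / 2"
        using infdist_approx[OF Mne[OF s] c2] by blast
      obtain k2 where k2: "k2 \<in> K" "dist m k2 < infdist m K + c / 2"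
        using infdist_approx[OF Kne c2] by blast
      have km: "dist k m < D s + c / 2" using m A[OF s k] by simp
      have mk2: "dist m k2 < D s - c / 2" using k2 cB s m(1) by fastforce
      have kk2: "dist k k2 \<le> 2 * D s" using dist_triangle[of k k2 m] km mk2 by simp
      have k2s: "infdist k2 (M s) \<le> D s - c / 2"
        using infdist_le[OF m(1), of k2] mk2 by (simp add: dist_commute)
      define k' where "k' = (1 - t) *\<^sub>R k + t *\<^sub>R k2"
      have "\<forall>i<n. infdist k' (M i) \<le> D i"
      proof (intro allI impI)
        fix i assume i: "i < n"
        have "infdist k' (M i) \<le> (1-t) * infdist k (M i) + t * infdist k2 (M i)"
          unfolding k'_def using infdist_convex[OF Mcv[OF i] Mne[OF i]] t0 t1 by simp
        also have "\<dots> \<le> (1-t) * D i + t * D i"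
          using A[OF i k] A[OF i k2(1)] t0 t1 by (intro add_mono mult_left_mono) auto
        finally show "infdist k' (M i) \<le> D i" by (simp add: algebra_simps)
      qed
      moreover have "infdist k' (M s) \<le> r"
      proof -
        have "infdist k' (M s) \<le> (1-t) * infdist k (M s) + t * infdist k2 (M s)"
          unfolding k'_def using infdist_convex[OF Mcv[OF s] Mne[OF s]] t0 t1 by simp
        also have "\<dots> \<le> (1-t) * D s + t * (D s - c / 2)"
          using A[OF s k] k2s t0 t1 by (intro add_mono mult_left_mono) auto
        finally show ?thesis unfolding r_def by (simp add: algebra_simps)
      qed
      ultimately have "k' \<in> L" unfolding L_def by simp
      moreover have "dist k k' \<le> c / 2"
      proof -
        have "dist k k' = norm (t *\<^sub>R (k - k2))" unfolding k'_def dist_norm by (simp add: algebra_simps)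
        also have "\<dots> = t * dist k k2" using t0 by (simp add: dist_norm)
        also have "\<dots> \<le> t * (2 * D s)" using kk2 t0 by simp
        finally show ?thesis using t4 by simp
      qed
      ultimately show "\<exists>k'\<in>L. dist k k' \<le> c / 2" by blast
    qed
    have Lne: "L \<noteq> {}" using near Kne by blast
    have Leq: "L = nbhd r (M s) \<inter> K_d n M d"
    proof -
      have eqi: "(pdist p (M i) \<le> d ! i) = (infdist p (M i) \<le> D i)" if i: "i < n" for p i
      proof -
        have "pdist p (M i) = ereal (infdist p (M i))" by (rule pdist_infdist[OF Mne[OF i]])
        moreover have "d ! i = ereal (D i)" using dnth[OF i] dHK[OF i] by simp
        ultimately show ?thesis by simp
      qed
      have eqs: "\<And>p. (pdist p (M s) \<le> ereal r) = (infdist p (M s) \<le> r)"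
        using pdist_infdist[OF Mne[OF s]] by simp
      show ?thesis
      proof (rule set_eqI)
        fix p
        have "p \<in> K_d n M d \<longleftrightarrow> (\<forall>i<n. infdist p (M i) \<le> D i)"
          unfolding K_d_def using eqi by simp (simp add: Ball_def)
        moreover have "p \<in> nbhd r (M s) \<longleftrightarrow> infdist p (M s) \<le> r"
          unfolding nbhd_def using eqs by simp
        ultimately show "p \<in> L \<longleftrightarrow> p \<in> nbhd r (M s) \<inter> K_d n M d" unfolding L_def by (simp add: conj_commute)
      qed
    qed
    have "nbhd r (M s) \<inter> K_d n M d \<noteq> {}" using Lne unfolding Leq .
    then have Lfc: "L \<in> fin_class (M 0)" unfolding Leq using hs r0 by blast
    then have SKL: "S_M n M K \<le> S_M n M L" using Kmin by blast
    define q where "q = min (t * c / 2) (c / 4)"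
    have q0: "0 < q" unfolding q_def using t0 c by simp
    have side1: "\<And>i x. i < n \<Longrightarrow> x \<in> M i \<Longrightarrow> infdist x L \<le> D i - c / 4"
    proof -
      fix i x assume i: "i < n" and x: "x \<in> M i"
      have c4: "c / 4 > 0" using c by simp
      obtain k where k: "k \<in> K" "dist x k < infdist x K + c / 4" using infdist_approx[OF Kne c4] by blast
      obtain k' where k': "k' \<in> L" "dist k k' \<le> c / 2" using near[OF k(1)] by blast
      have "infdist x L \<le> dist x k'" using k'(1) by (rule infdist_le)
      also have "\<dots> \<le> dist x k + dist k k'" by (rule dist_triangle)
      moreover have "infdist x K \<le> D i - c" using cB i x by blast
      ultimately show "infdist x L \<le> D i - c / 4" using k(2) k'(2) by linarith
    qed
    have side2: "\<And>i p. i < n \<Longrightarrow> p \<in> L \<Longrightarrow> infdist p (M i) \<le> D i"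
      and side3: "\<And>p. p \<in> L \<Longrightarrow> infdist p (M s) \<le> r" unfolding L_def by auto
    have E: "\<And>i. i < n \<Longrightarrow> dH L (M i) \<le> ereal (D i)"
    proof -
      fix i assume i: "i < n"
      have "(SUP a\<in>L. ereal (infdist a (M i))) \<le> ereal (D i)"
        by (rule SUP_least) (use side2[OF i] in simp)
      moreover have "(SUP b\<in>M i. ereal (infdist b L)) \<le> ereal (D i)"
      proof (rule SUP_least)
        fix b assume "b \<in> M i"
        then have "infdist b L \<le> D i - c / 4" by (rule side1[OF i])
        then show "ereal (infdist b L) \<le> ereal (D i)" using c by simp
      qed
      ultimately show "dH L (M i) \<le> ereal (D i)" unfolding dH_infdist[OF Lne Mne[OF i]] by simp
    qed
    have Es: "dH L (M s) \<le> ereal (D s - q)"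
    proof -
      have "(SUP a\<in>L. ereal (infdist a (M s))) \<le> ereal (D s - q)"
      proof (rule SUP_least)
        fix a assume "a \<in> L"
        then have "infdist a (M s) \<le> r" by (rule side3)
        moreover have "q \<le> t * c / 2" unfolding q_def by simp
        ultimately show "ereal (infdist a (M s)) \<le> ereal (D s - q)" unfolding r_def by simp
      qed
      moreover have "(SUP b\<in>M s. ereal (infdist b L)) \<le> ereal (D s - q)"
      proof (rule SUP_least)
        fix b assume "b \<in> M s"
        then have "infdist b L \<le> D s - c / 4" by (rule side1[OF s])
        moreover have "q \<le> c / 4" unfolding q_def by simp
        ultimately show "ereal (infdist b L) \<le> ereal (D s - q)" by simp
      qed
      ultimately show ?thesis unfolding dH_infdist[OF Lne Mne[OF s]] by simp
    qed
    define F where "F i = real_of_ereal (dH L (M i))" for i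
    have dHL: "\<And>i. i < n \<Longrightarrow> dH L (M i) = ereal (F i)"
    proof -
      fix i assume i: "i < n"
      have "0 \<le> dH L (M i)" using dH_nonneg Lne Mne i by blast
      then show "dH L (M i) = ereal (F i)" unfolding F_def using E[OF i] by (cases "dH L (M i)") auto
    qed
    have "S_M n M L = ereal (\<Sum>i<n. F i)" unfolding S_M_def sum_ereal[symmetric] using dHL by (intro sum.cong) auto
    moreover have "S_M n M K = ereal (\<Sum>i<n. D i)" unfolding S_M_def sum_ereal[symmetric] using dHK by (intro sum.cong) auto
    moreover have "(\<Sum>i<n. F i) < (\<Sum>i<n. D i)"
    proof (rule sum_strict_mono_ex1)
      show "finite {..<n}" by simp
      show "\<forall>x\<in>{..<n}. F x \<le> D x"
      proof
        fix x assume "x \<in> {..<n}"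
        then have x: "x < n" by simp
        show "F x \<le> D x" using E[OF x] dHL[OF x] by simp
      qed
      have "F s \<le> D s - q" using Es dHL[OF s] by simp
      then have "F s < D s" using q0 by simp
      then show "\<exists>a\<in>{..<n}. F a < D a" using s by blast
    qed
    ultimately show False using SKL by simp
  qed
qed

end
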